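(* Let $M$ be a finite monoid such that for all $x,y\in M$, either $R(x)\subseteq R(xy)$ or $R(y)\subseteq R(xy)$. Then for all $x,y\in M$ there exists $k\ge1$ such that $(xy)^kx=x$ or $(yx)^ky=y$.
   Context: For $m$ in a monoid $M$, $R(m)=\{my: y\in M\}$ is the right ideal of $m$. *)

theory Defs
  imports Main
begin

definition right_ideal :: "'a::monoid_mult \<Rightarrow> 'a set" where
  "right_ideal m = {m * y | y. True}"

end

theory Submission
  imports Defs
begin

lemma period:
  fixes p :: "'a::{monoid_mult, finite}"
  shows "\<exists>i k. k \<ge> 1 \<and> p ^ (Suc i + k) = p ^ Suc i"
proof -
  have "\<not> inj (\<lambda>n::nat. p ^ Suc n)"
  proof
    assume "inj (\<lambda>n::nat. p ^ Suc n)"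
    then have "finite (UNIV::nat set)"
      using finite_imageD[of "\<lambda>n::nat. p ^ Suc n" UNIV] by simp
    then show False by simp
  qed
  then obtain i j :: nat where ij: "i \<noteq> j" "p ^ Suc i = p ^ Suc j"
    unfolding inj_def by blast
  show ?thesis
  proof (cases "i < j")
    case True
    then show ?thesis using ij by (intro exI[of _ i] exI[of _ "j - i"]) auto
  next
    case False
    then have "j < i" using ij by simp
    then show ?thesis using ij by (intro exI[of _ j] exI[of _ "i - j"]) auto
  qed
qed

lemma pow_expand:
  fixes p d :: "'a::monoid_mult"
  assumes "p = p * p * d"
  shows "p = p ^ Suc n * d ^ n"
proof (induction n)
  case 0
  then show ?case by simp
next
  case (Suc n)
  have "p ^ Suc n * d ^ n = p ^ n * p * d ^ n"
    by (simp add: power_commutes)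
  also have "\<dots> = p ^ n * (p * p * d) * d ^ n" using assms by simp
  also have "\<dots> = p ^ Suc (Suc n) * d ^ Suc n"
    by (metis power_Suc power_Suc2 mult.assoc)
  finally show ?case using Suc by simp
qed

lemma keylemma:
  fixes a b c :: "'a::{monoid_mult, finite}"
  assumes hyp: "\<And>a b :: 'a. right_ideal a \<subseteq> right_ideal (a * b) \<or> right_ideal b \<subseteq> right_ideal (a * b)"
    and abc: "a = a * b * c"
  shows "\<exists>k::nat. k \<ge> 1 \<and> (a * b) ^ k * a = a"
proof -
  define p where "p = a * b"
  have "p \<in> right_ideal p" unfolding right_ideal_def by (auto intro: exI[of _ 1])
  then have "p \<in> right_ideal (p * p)" using hyp[of p p] by blast
  then obtain d where d: "p = p * p * d" unfolding right_ideal_def by (auto simp: mult.assoc)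
  obtain i k where ik: "k \<ge> 1" "p ^ (Suc i + k) = p ^ Suc i" using period by blast
  have a: "a = p ^ Suc i * (d ^ i * c)"
    using abc pow_expand[OF d, of i] unfolding p_def[symmetric] by (metis mult.assoc)
  have "p ^ k * a = p ^ (k + Suc i) * (d ^ i * c)"
    by (subst a) (metis power_add mult.assoc)
  also have "\<dots> = a" using ik a by (simp add: add.commute)
  finally show ?thesis using ik p_def by blast
qed

theorem lemmaB2:
  fixes x y :: "'a::{monoid_mult, finite}"
  assumes hyp: "\<And>a b :: 'a. right_ideal a \<subseteq> right_ideal (a * b) \<or> right_ideal b \<subseteq> right_ideal (a * b)"
  shows "\<exists>k::nat. k \<ge> 1 \<and> ((x * y) ^ k * x = x \<or> (y * x) ^ k * y = y)"
proof -
  have self: "\<And>a::'a. a \<in> right_ideal a" unfolding right_ideal_def by (auto intro: exI[of _ 1])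
  have mem: "\<And>a b::'a. a \<in> right_ideal b \<Longrightarrow> \<exists>c. a = b * c" unfolding right_ideal_def by auto
  from hyp[of x y] self have "x \<in> right_ideal (x * y) \<or> y \<in> right_ideal (x * y)" by blast
  then show ?thesis
  proof
    assume "x \<in> right_ideal (x * y)"
    then obtain c where "x = x * y * c" using mem by blast
    then show ?thesis using keylemma[OF hyp] by blast
  next
    assume "y \<in> right_ideal (x * y)"
    then obtain c where c: "y = x * y * c" using mem by blast
    from hyp[of y x] self have "y \<in> right_ideal (y * x) \<or> x \<in> right_ideal (y * x)" by blast
    then show ?thesis
    proof
      assume "y \<in> right_ideal (y * x)"
      then obtain w where "y = y * x * w" using mem by blast
      then show ?thesis using keylemma[OF hyp] by blast
    next
      assume "x \<in> right_ideal (y * x)"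
      then obtain w where w: "x = y * x * w" using mem by blast
      have "y = y * x * (w * y * c)" using c w by (metis mult.assoc)
      then show ?thesis using keylemma[OF hyp] by blast
    qed
  qed
qed

end
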